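(* Let $A$ be a finite alphabet, $R$ a symmetric relation on $A$ (set of pairs $(a,b)$), and $I$ a finite set of circular words over $A$; let $S=(A,I,R)$ be the $(1,3)$-CSSH circular splicing system with rules $a\#1\$b\#1$ for $(a,b)\in R$. Then the flat splicing system $\mathcal{S}=(A,Y,R')$ with $Y=Lin(I)$ and $R'=\{\langle a\mid 1-1\mid b\rangle : (a,b)\in R\}$ satisfies $L(\mathcal{S})=Lin(L(S))$. Conversely, let $\mathcal{S}=(A,Y,R')$ be a flat splicing system where $Y\subseteq A^+$ is a finite language closed under the conjugacy relation, $R'=\{\langle a\mid 1-1\mid b\rangle : (a,b)\in R\}$ and $R$ is a symmetric relation on $A$. Let $I=\sim Y$. Then $L(\mathcal{S})=Lin(L(S))$, where $S=(A,I,R)$ is the $(1,3)$-CSSH system with rules $a\#1\$b\#1$ for $(a,b)\in R$.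
   Context: $1$ denotes the empty word, $A^+=A^*\setminus\{1\}$. Conjugacy: $xy\sim yx$; a circular word $\sim w$ is the conjugacy class of $w$; for a set $L$ of circular words, $Lin(L)=\{w\in A^*:\ \sim w\in L\}$; for $Y\subseteq A^*$, $\sim Y=\{\sim w:w\in Y\}$. $(1,3)$-CSSH circular splicing: the rule $a\#1\$b\#1$ (with $a,b$ letters) applied to circular words $\sim xa$ and $\sim yb$ produces $\sim xayb$. $L(S)$ is the smallest set of circular words containing $I$ and closed under applying rules of $R$ to any two of its elements. Flat splicing system $\mathcal{S}=(A,Y,R')$: rules $\langle\alpha\mid\beta-\gamma\mid\delta\rangle$; applying it to $u=x\alpha\beta y$ and $v=\gamma z\delta$ yields $x\alpha\gamma z\delta\beta y$. In particular $\langle a\mid1-1\mid b\rangle$ applied to $u=xay$ and $v=zb$ yields $xazby$. $L(\mathcal{S})$ is the smallest language containing $Y$ and closed under applying rules of $R'$. *)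

theory Defs
  imports Main
begin

text \<open>Words over an alphabet of type 'a are lists; 1 is the empty list.\<close>

definition conjugate :: "'a list \<Rightarrow> 'a list \<Rightarrow> bool" where
  "conjugate w w' \<longleftrightarrow> (\<exists>x y. w = x @ y \<and> w' = y @ x)"

definition circ :: "'a list \<Rightarrow> 'a list set" where
  "circ w = {w'. conjugate w w'}"

definition Lin :: "'a list set set \<Rightarrow> 'a list set" where
  "Lin L = {w. circ w \<in> L}"

text \<open>Circular splicing (Paun) with rules (u1,u2,u3,u4) = u1#u2$u3#u4:
  from circ(h u1 u2) and circ(k u3 u4) produce circ(u2 h u1 u4 k u3).\<close>
inductive_set circ_splicing_lang ::
  "'a list set set \<Rightarrow> ('a list \<times> 'a list \<times> 'a list \<times> 'a list) set \<Rightarrow> 'a list set set"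
  for I Rules where
  init: "c \<in> I \<Longrightarrow> c \<in> circ_splicing_lang I Rules"
| splice: "\<lbrakk> (u1, u2, u3, u4) \<in> Rules;
             circ (h @ u1 @ u2) \<in> circ_splicing_lang I Rules;
             circ (k @ u3 @ u4) \<in> circ_splicing_lang I Rules \<rbrakk>
           \<Longrightarrow> circ (u2 @ h @ u1 @ u4 @ k @ u3) \<in> circ_splicing_lang I Rules"

definition cssh13_rules :: "('a \<times> 'a) set \<Rightarrow> ('a list \<times> 'a list \<times> 'a list \<times> 'a list) set" where
  "cssh13_rules R = {([a], [], [b], []) | a b. (a, b) \<in> R}"

text \<open>Flat splicing with rules <alpha|beta - gamma|delta>:
  from x alpha beta y and gamma z delta produce x alpha gamma z delta beta y.\<close>
inductive_set flat_splicing_lang ::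
  "'a list set \<Rightarrow> ('a list \<times> 'a list \<times> 'a list \<times> 'a list) set \<Rightarrow> 'a list set"
  for Y Rules where
  init: "w \<in> Y \<Longrightarrow> w \<in> flat_splicing_lang Y Rules"
| splice: "\<lbrakk> (\<alpha>, \<beta>, \<gamma>, \<delta>) \<in> Rules;
             x @ \<alpha> @ \<beta> @ y \<in> flat_splicing_lang Y Rules;
             \<gamma> @ z @ \<delta> \<in> flat_splicing_lang Y Rules \<rbrakk>
           \<Longrightarrow> x @ \<alpha> @ \<gamma> @ z @ \<delta> @ \<beta> @ y \<in> flat_splicing_lang Y Rules"

definition flat_rules :: "('a \<times> 'a) set \<Rightarrow> ('a list \<times> 'a list \<times> 'a list \<times> 'a list) set" where
  "flat_rules R = {([a], [], [], [b]) | a b. (a, b) \<in> R}"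

end

theory Submission
  imports Defs
begin

lemma conj_rot: "conjugate w w' \<longleftrightarrow> (\<exists>n. w' = rotate n w)"
proof
  assume "conjugate w w'"
  then obtain x y where "w = x @ y" "w' = y @ x" unfolding conjugate_def by blast
  then show "\<exists>n. w' = rotate n w" by (metis rotate_append)
next
  assume "\<exists>n. w' = rotate n w"
  then obtain n where "w' = rotate n w" by blast
  then show "conjugate w w'" unfolding conjugate_def
    by (metis append_take_drop_id rotate_drop_take)
qed

lemma conj_refl: "conjugate w w"
  unfolding conjugate_def by (rule exI[of _ "[]"]) simp

lemma conj_sym: "conjugate w w' \<Longrightarrow> conjugate w' w"
  unfolding conjugate_def by blast

lemma conj_trans: "conjugate u v \<Longrightarrow> conjugate v w \<Longrightarrow> conjugate u w"
  unfolding conj_rot by (metis rotate_rotate)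

lemma circ_eq: "circ w = circ w' \<longleftrightarrow> conjugate w w'"
proof
  assume "circ w = circ w'"
  then have "w' \<in> circ w" using conj_refl unfolding circ_def by blast
  then show "conjugate w w'" unfolding circ_def by simp
next
  assume "conjugate w w'"
  then show "circ w = circ w'" unfolding circ_def
    using conj_trans conj_sym by blast
qed

lemma flat_step:
  assumes "(a,b) \<in> R" "x @ [a] @ y \<in> flat_splicing_lang Y (flat_rules R)"
    "z @ [b] \<in> flat_splicing_lang Y (flat_rules R)"
  shows "x @ [a] @ z @ [b] @ y \<in> flat_splicing_lang Y (flat_rules R)"
proof -
  have r: "([a], [], [], [b]) \<in> flat_rules R" using assms(1) unfolding flat_rules_def by blast
  have "x @ [a] @ [] @ z @ [b] @ [] @ y \<in> flat_splicing_lang Y (flat_rules R)"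
    by (rule flat_splicing_lang.splice[OF r]) (use assms in simp_all)
  then show ?thesis by simp
qed

lemma flat_sub:
  assumes "w \<in> flat_splicing_lang (Lin I) (flat_rules R)"
  shows "circ w \<in> circ_splicing_lang I (cssh13_rules R)"
  using assms
proof (induction rule: flat_splicing_lang.induct)
  case (init w)
  then show ?case by (simp add: Lin_def circ_splicing_lang.init)
next
  case (splice \<alpha> \<beta> \<gamma> \<delta> x y z)
  then obtain a b where ab: "\<alpha> = [a]" "\<beta> = []" "\<gamma> = []" "\<delta> = [b]" "(a,b) \<in> R"
    unfolding flat_rules_def by blast
  have r: "([a], [], [b], []) \<in> cssh13_rules R" using ab unfolding cssh13_rules_def by blast
  have e1: "circ (y @ x @ [a]) = circ (x @ [a] @ y)"
    unfolding circ_eq conjugate_def by (rule exI[of _ y], rule exI[of _ "x@[a]"]) simp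
  have h1: "circ ((y @ x) @ [a] @ []) \<in> circ_splicing_lang I (cssh13_rules R)"
    using splice ab e1 by simp
  have h2: "circ (z @ [b] @ []) \<in> circ_splicing_lang I (cssh13_rules R)"
    using splice ab by simp
  have "circ ([] @ (y @ x) @ [a] @ [] @ z @ [b]) \<in> circ_splicing_lang I (cssh13_rules R)"
    by (rule circ_splicing_lang.splice[OF r h1 h2])
  moreover have "circ ([] @ (y @ x) @ [a] @ [] @ z @ [b]) = circ (x @ [a] @ z @ [b] @ y)"
    unfolding circ_eq conjugate_def by (rule exI[of _ y], rule exI[of _ "x@[a]@z@[b]"]) simp
  ultimately show ?case using ab by simp
qed

lemma circ_sub:
  assumes "c \<in> circ_splicing_lang I (cssh13_rules R)" "sym R"
  shows "\<forall>w. circ w = c \<longrightarrow> w \<in> flat_splicing_lang (Lin I) (flat_rules R)"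
  using assms(1)
proof (induction rule: circ_splicing_lang.induct)
  case (init c)
  then show ?case by (auto simp: Lin_def intro: flat_splicing_lang.init)
next
  case (splice u1 u2 u3 u4 h k)
  then obtain a b where ab: "u1 = [a]" "u2 = []" "u3 = [b]" "u4 = []" "(a,b) \<in> R"
    unfolding cssh13_rules_def by blast
  have ba: "(b,a) \<in> R" using ab(5) assms(2) by (simp add: symD)
  let ?F = "flat_splicing_lang (Lin I) (flat_rules R)"
  have IH1: "\<And>w. conjugate (h @ [a]) w \<Longrightarrow> w \<in> ?F"
    using splice.IH(1) ab by (metis append_Nil2 circ_eq)
  have IH2: "\<And>w. conjugate (k @ [b]) w \<Longrightarrow> w \<in> ?F"
    using splice.IH(2) ab by (metis append_Nil2 circ_eq)
  show ?case
  proof (intro allI impI)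
    fix w assume "circ w = circ (u2 @ h @ u1 @ u4 @ k @ u3)"
    then have "conjugate (h @ [a] @ k @ [b]) w" using ab by (simp add: circ_eq conj_sym)
    then obtain p q where pq: "p @ q = (h @ [a]) @ (k @ [b])" "w = q @ p"
      unfolding conjugate_def by auto
    from pq(1) obtain us where
      "(p = (h @ [a]) @ us \<and> us @ q = k @ [b]) \<or> (p @ us = h @ [a] \<and> q = us @ (k @ [b]))"
      using iffD1[OF append_eq_append_conv2 pq(1)] by (elim exE) (rule that)
    then show "w \<in> ?F"
    proof
      assume c1: "p = (h @ [a]) @ us \<and> us @ q = k @ [b]"
      show ?thesis
      proof (cases q rule: rev_exhaust)
        case Nil
        have "h @ [a] @ k @ [b] @ [] \<in> ?F"
          by (rule flat_step[OF ab(5)], rule IH1, simp add: conj_refl, rule IH2, simp add: conj_refl)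
        then show ?thesis using c1 Nil pq by simp
      next
        case (snoc q' b')
        then have q: "q = q' @ [b]" "us @ q' = k" using c1 by auto
        have "q' @ [b] @ h @ [a] @ us \<in> ?F"
          apply (rule flat_step[OF ba])
           apply (rule IH2)
          prefer 2 apply (rule IH1, simp add: conj_refl)
          unfolding conjugate_def using q by (intro exI[of _ us] exI[of _ "q' @ [b]"]) auto
        then show ?thesis using c1 q pq by simp
      qed
    next
      assume c2: "p @ us = h @ [a] \<and> q = us @ (k @ [b])"
      show ?thesis
      proof (cases us rule: rev_exhaust)
        case Nil
        have "k @ [b] @ h @ [a] @ [] \<in> ?F"
          by (rule flat_step[OF ba], rule IH2, simp add: conj_refl, rule IH1, simp add: conj_refl)
        then show ?thesis using c2 Nil pq by simp
      next
        case (snoc us' a')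
        then have u: "us = us' @ [a]" "p @ us' = h" using c2 by auto
        have "us' @ [a] @ k @ [b] @ p \<in> ?F"
          apply (rule flat_step[OF ab(5)])
           apply (rule IH1)
          prefer 2 apply (rule IH2, simp add: conj_refl)
          unfolding conjugate_def using u by (intro exI[of _ p] exI[of _ "us' @ [a]"]) auto
        then show ?thesis using c2 u pq by simp
      qed
    qed
  qed
qed

lemma main_eq:
  assumes "sym R"
  shows "flat_splicing_lang (Lin I) (flat_rules R) = Lin (circ_splicing_lang I (cssh13_rules R))"
proof
  show "flat_splicing_lang (Lin I) (flat_rules R) \<subseteq> Lin (circ_splicing_lang I (cssh13_rules R))"
    using flat_sub unfolding Lin_def by blast
  show "Lin (circ_splicing_lang I (cssh13_rules R)) \<subseteq> flat_splicing_lang (Lin I) (flat_rules R)"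
    using circ_sub[OF _ assms] unfolding Lin_def by blast
qed

theorem proposition11p7:
  fixes A :: "'a set" and R :: "('a \<times> 'a) set"
    and I :: "'a list set set" and Y :: "'a list set"
  assumes "finite A" and "R \<subseteq> A \<times> A" and "sym R"
  shows "((finite I \<and> I \<subseteq> {circ w | w. set w \<subseteq> A}) \<longrightarrow>
            flat_splicing_lang (Lin I) (flat_rules R)
              = Lin (circ_splicing_lang I (cssh13_rules R)))
       \<and> ((finite Y \<and> Y \<subseteq> {w. set w \<subseteq> A \<and> w \<noteq> []}
             \<and> (\<forall>w w'. w \<in> Y \<and> conjugate w w' \<longrightarrow> w' \<in> Y)) \<longrightarrow>
            flat_splicing_lang Y (flat_rules R)
              = Lin (circ_splicing_lang (circ ` Y) (cssh13_rules R)))"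
proof (intro conjI impI)
  show "flat_splicing_lang (Lin I) (flat_rules R) = Lin (circ_splicing_lang I (cssh13_rules R))"
    by (rule main_eq[OF assms(3)])
next
  assume "finite Y \<and> Y \<subseteq> {w. set w \<subseteq> A \<and> w \<noteq> []}
             \<and> (\<forall>w w'. w \<in> Y \<and> conjugate w w' \<longrightarrow> w' \<in> Y)"
  then have cl: "\<And>w w'. w \<in> Y \<Longrightarrow> conjugate w w' \<Longrightarrow> w' \<in> Y" by blast
  have "Lin (circ ` Y) = Y"
  proof
    show "Lin (circ ` Y) \<subseteq> Y"
    proof
      fix x assume "x \<in> Lin (circ ` Y)"
      then obtain y where "y \<in> Y" "circ x = circ y" unfolding Lin_def by auto
      then show "x \<in> Y" using cl[of y x] by (simp add: circ_eq conj_sym)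
    qed
    show "Y \<subseteq> Lin (circ ` Y)" unfolding Lin_def by auto
  qed
  then show "flat_splicing_lang Y (flat_rules R) = Lin (circ_splicing_lang (circ ` Y) (cssh13_rules R))"
    using main_eq[OF assms(3), of "circ ` Y"] by simp
qed

end
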